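(* For every $\delta>0$ there exists an instance of weighted correlation clustering on a complete graph with weights satisfying the triangle inequality for which the ratio between the minimum cost of a clustering and the optimal value of the LP relaxation is at least $6/5-\delta$.
   Context: Weighted correlation clustering on a complete graph: finite vertex set $V$; each pair $u\ne v$ has weights $\lambda^+_{uv},\lambda^-_{uv}\ge 0$ with $\lambda^+_{uv}+\lambda^-_{uv}=1$. The cost of a clustering (partition of $V$) is $\sum_{u\ne v}\big(\lambda^+_{uv}\mathbb{1}[u,v\text{ in different clusters}]+\lambda^-_{uv}\mathbb{1}[u,v\text{ in the same cluster}]\big)$ (each unordered pair once). The weights satisfy the triangle inequality if $\lambda^-_{uw}\le\lambda^-_{uv}+\lambda^-_{vw}$ for all distinct $u,v,w$. LP relaxation: variables $x_{uv}=x_{vu}\in[0,1]$, $x_{uu}=0$, $x_{uv}+x_{vw}\ge x_{uw}$ for all $u,v,w$; minimize $\sum_{u\ne v}\big(\lambda^+_{uv}x_{uv}+\lambda^-_{uv}(1-x_{uv})\big)$. *)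

theory Defs
  imports "HOL-Analysis.Analysis" "HOL-Library.Disjoint_Sets"
begin

text \<open>An instance: a finite vertex set V of naturals with weights lp u v = lambda^+_{uv};
  lambda^-_{uv} = 1 - lambda^+_{uv}. Unordered pairs are enumerated as (u,v) with u < v.\<close>

definition pairs :: "nat set \<Rightarrow> (nat \<times> nat) set" where
  "pairs V = {(u, v). u \<in> V \<and> v \<in> V \<and> u < v}"

definition valid_weights :: "nat set \<Rightarrow> (nat \<Rightarrow> nat \<Rightarrow> real) \<Rightarrow> bool" where
  "valid_weights V lp \<longleftrightarrow>
     (\<forall>u\<in>V. \<forall>v\<in>V. u \<noteq> v \<longrightarrow> 0 \<le> lp u v \<and> lp u v \<le> 1 \<and> lp u v = lp v u)"

definition triangle_ineq :: "nat set \<Rightarrow> (nat \<Rightarrow> nat \<Rightarrow> real) \<Rightarrow> bool" where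
  "triangle_ineq V lp \<longleftrightarrow>
     (\<forall>u\<in>V. \<forall>v\<in>V. \<forall>w\<in>V. u \<noteq> v \<and> v \<noteq> w \<and> u \<noteq> w \<longrightarrow>
        1 - lp u w \<le> (1 - lp u v) + (1 - lp v w))"

definition same_cluster :: "nat set set \<Rightarrow> nat \<Rightarrow> nat \<Rightarrow> bool" where
  "same_cluster P u v \<longleftrightarrow> (\<exists>C\<in>P. u \<in> C \<and> v \<in> C)"

definition cc_cost :: "nat set \<Rightarrow> (nat \<Rightarrow> nat \<Rightarrow> real) \<Rightarrow> nat set set \<Rightarrow> real" where
  "cc_cost V lp P = (\<Sum>(u, v)\<in>pairs V.
      (if same_cluster P u v then 1 - lp u v else lp u v))"

definition cc_opt :: "nat set \<Rightarrow> (nat \<Rightarrow> nat \<Rightarrow> real) \<Rightarrow> real" where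
  "cc_opt V lp = Inf (cc_cost V lp ` {P. partition_on V P})"

definition lp_feasible :: "nat set \<Rightarrow> (nat \<Rightarrow> nat \<Rightarrow> real) \<Rightarrow> bool" where
  "lp_feasible V x \<longleftrightarrow>
     (\<forall>u\<in>V. \<forall>v\<in>V. x u v = x v u \<and> 0 \<le> x u v \<and> x u v \<le> 1) \<and>
     (\<forall>u\<in>V. x u u = 0) \<and>
     (\<forall>u\<in>V. \<forall>v\<in>V. \<forall>w\<in>V. x u w \<le> x u v + x v w)"

definition lp_obj :: "nat set \<Rightarrow> (nat \<Rightarrow> nat \<Rightarrow> real) \<Rightarrow> (nat \<Rightarrow> nat \<Rightarrow> real) \<Rightarrow> real" where
  "lp_obj V lp x = (\<Sum>(u, v)\<in>pairs V. lp u v * x u v + (1 - lp u v) * (1 - x u v))"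

definition lp_opt :: "nat set \<Rightarrow> (nat \<Rightarrow> nat \<Rightarrow> real) \<Rightarrow> real" where
  "lp_opt V lp = Inf (lp_obj V lp ` {x. lp_feasible V x})"

end

theory Submission
  imports Defs
begin

definition sg :: "nat \<Rightarrow> nat \<Rightarrow> real" where
  "sg k u = (if u < k then 1 else -1)"

definition lpw :: "nat \<Rightarrow> nat \<Rightarrow> nat \<Rightarrow> real" where
  "lpw k u v = 1/2 - sg k u * sg k v / 6"

definition xw :: "nat \<Rightarrow> nat \<Rightarrow> nat \<Rightarrow> real" where
  "xw k u v = (if u = v then 0 else 3/4 + sg k u * sg k v / 4)"

lemma sg_prod: "sg k u * sg k v = 1 \<or> sg k u * sg k v = -1"
  by (simp add: sg_def)

lemma sg_sq: "sg k u * sg k u = 1"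
  by (simp add: sg_def)

lemma sym_sum:
  fixes g :: "nat \<Rightarrow> nat \<Rightarrow> real"
  assumes fin: "finite V" and sym: "\<And>u v. g u v = g v u"
  shows "(\<Sum>(u,v)\<in>V\<times>V. g u v) = (\<Sum>u\<in>V. g u u) + 2 * (\<Sum>(u,v)\<in>pairs V. g u v)"
proof -
  define D where "D = (\<lambda>u. (u,u)) ` V"
  define Q where "Q = prod.swap ` pairs V"
  have finP: "finite (pairs V)"
    by (rule finite_subset[of _ "V \<times> V"]) (auto simp: pairs_def fin)
  have eq: "V \<times> V = D \<union> (pairs V \<union> Q)"
  proof (rule set_eqI)
    fix p :: "nat \<times> nat"
    obtain a b where p: "p = (a,b)" by (cases p)
    have "a < b \<or> a = b \<or> b < a" by arith
    then show "p \<in> V \<times> V \<longleftrightarrow> p \<in> D \<union> (pairs V \<union> Q)"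
      unfolding p D_def Q_def pairs_def by (auto simp: image_iff)
  qed
  have d1: "D \<inter> (pairs V \<union> Q) = {}" by (auto simp: D_def Q_def pairs_def)
  have d2: "pairs V \<inter> Q = {}" by (auto simp: Q_def pairs_def)
  have fD: "finite D" using fin by (simp add: D_def)
  have fQ: "finite Q" using finP by (simp add: Q_def)
  have sD: "(\<Sum>(u,v)\<in>D. g u v) = (\<Sum>u\<in>V. g u u)"
    unfolding D_def by (subst sum.reindex) (auto simp: inj_on_def)
  have sQ: "(\<Sum>(u,v)\<in>Q. g u v) = (\<Sum>(u,v)\<in>pairs V. g u v)"
    unfolding Q_def
    by (subst sum.reindex) (auto simp: inj_on_def sym intro!: sum.cong)
  have "(\<Sum>(u,v)\<in>D \<union> (pairs V \<union> Q). g u v) = (\<Sum>(u,v)\<in>D. g u v) + ((\<Sum>(u,v)\<in>pairs V. g u v) + (\<Sum>(u,v)\<in>Q. g u v))"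
  proof -
    have fPQ: "finite (pairs V \<union> Q)" using finP fQ by simp
    show ?thesis
      by (simp only: sum.union_disjoint[OF fD fPQ d1] sum.union_disjoint[OF finP fQ d2])
  qed
  then show ?thesis unfolding eq sD sQ by (simp only: mult_2)
qed

lemma partition_sum_nonneg:
  assumes fin: "finite V" and P: "partition_on V P"
  shows "(\<Sum>(u,v)\<in>V\<times>V. if same_cluster P u v then f u * f v else (0::real)) \<ge> 0"
proof -
  have U: "\<Union>P = V" and dj: "disjoint P" using P by (simp_all add: partition_on_def)
  have finP: "finite P"
    by (rule finite_UnionD) (simp add: U fin)
  have finC: "\<And>C. C \<in> P \<Longrightarrow> finite C"
  proof -
    fix C assume "C \<in> P"
    then have "C \<subseteq> V" using U by blast
    then show "finite C" using fin by (rule finite_subset)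
  qed
  have seteq: "{p \<in> V\<times>V. same_cluster P (fst p) (snd p)} = (\<Union>C\<in>P. C \<times> C)"
  proof (rule set_eqI)
    fix p :: "nat \<times> nat"
    obtain a b where p: "p = (a,b)" by (cases p)
    show "p \<in> {p \<in> V\<times>V. same_cluster P (fst p) (snd p)} \<longleftrightarrow> p \<in> (\<Union>C\<in>P. C \<times> C)"
      unfolding p same_cluster_def using U by auto
  qed
  have "(\<Sum>(u,v)\<in>V\<times>V. if same_cluster P u v then f u * f v else (0::real))
        = (\<Sum>p\<in>V\<times>V. if same_cluster P (fst p) (snd p) then f (fst p) * f (snd p) else 0)"
    by (intro sum.cong refl) (simp add: split_def)
  also have "\<dots> = (\<Sum>p\<in>{p \<in> V\<times>V. same_cluster P (fst p) (snd p)}. f (fst p) * f (snd p))"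
    using fin by (intro sum.inter_filter[symmetric]) simp
  also have "\<dots> = (\<Sum>p\<in>(\<Union>C\<in>P. C \<times> C). f (fst p) * f (snd p))"
    by (simp only: seteq)
  also have "\<dots> = (\<Sum>C\<in>P. \<Sum>p\<in>C\<times>C. f (fst p) * f (snd p))"
  proof (rule sum.UNION_disjoint)
    show "finite P" by (rule finP)
    show "\<forall>C\<in>P. finite (C \<times> C)" using finC by auto
    show "\<forall>C\<in>P. \<forall>D\<in>P. C \<noteq> D \<longrightarrow> C \<times> C \<inter> D \<times> D = {}"
    proof (intro ballI impI)
      fix C D assume "C \<in> P" "D \<in> P" "C \<noteq> D"
      then have "C \<inter> D = {}" by (rule disjointD[OF dj])
      then show "C \<times> C \<inter> D \<times> D = {}" by blast
    qed
  qed
  also have "\<dots> = (\<Sum>C\<in>P. (\<Sum>u\<in>C. f u) * (\<Sum>u\<in>C. f u))"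
    by (intro sum.cong refl) (simp only: sum_product sum.cartesian_product, simp add: case_prod_unfold)
  also have "\<dots> \<ge> 0" by (intro sum_nonneg) simp
  finally show ?thesis .
qed


lemma sum_sg: "(\<Sum>u\<in>{0..<2*k}. sg k u) = 0"
proof -
  have "(\<Sum>u\<in>{0..<2*k}. sg k u) = (\<Sum>u\<in>{0..<k}. sg k u) + (\<Sum>u\<in>{k..<2*k}. sg k u)"
    by (rule sum.atLeastLessThan_concat[symmetric]) auto
  also have "(\<Sum>u\<in>{0..<k}. sg k u) = (\<Sum>u\<in>{0..<k}. 1)"
    by (rule sum.cong) (auto simp: sg_def)
  also have "(\<Sum>u\<in>{k..<2*k}. sg k u) = (\<Sum>u\<in>{k..<2*k}. -1)"
    by (rule sum.cong) (auto simp: sg_def)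
  finally show ?thesis by simp
qed

lemma S1: "(\<Sum>(u,v)\<in>pairs {0..<2*k}. (1::real)) = 2 * real k ^ 2 - real k"
proof -
  have "(\<Sum>(u,v)\<in>{0..<2*k}\<times>{0..<2*k}. (1::real)) = (\<Sum>u\<in>{0..<2*k}. 1) + 2 * (\<Sum>(u,v)\<in>pairs {0..<2*k}. (1::real))"
    by (rule sym_sum) auto
  moreover have "(\<Sum>(u,v)\<in>{0..<2*k}\<times>{0..<2*k}. (1::real)) = real (2*k) * real (2*k)"
    by (simp add: case_prod_unfold)
  ultimately show ?thesis by (simp add: power2_eq_square algebra_simps)
qed

lemma S2: "(\<Sum>(u,v)\<in>pairs {0..<2*k}. sg k u * sg k v) = - real k"
proof -
  have "(\<Sum>(u,v)\<in>{0..<2*k}\<times>{0..<2*k}. sg k u * sg k v) = (\<Sum>u\<in>{0..<2*k}. sg k u * sg k u) + 2 * (\<Sum>(u,v)\<in>pairs {0..<2*k}. sg k u * sg k v)"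
    by (rule sym_sum) auto
  moreover have "(\<Sum>(u,v)\<in>{0..<2*k}\<times>{0..<2*k}. sg k u * sg k v) = (\<Sum>u\<in>{0..<2*k}. sg k u) * (\<Sum>u\<in>{0..<2*k}. sg k u)"
    by (simp only: sum_product sum.cartesian_product)
  moreover have "(\<Sum>u\<in>{0..<2*k}. sg k u * sg k u) = real (2*k)"
    by (simp add: sg_sq)
  ultimately show ?thesis using sum_sg[of k] by simp
qed

lemma S3:
  assumes P: "partition_on {0..<2*k} P"
  shows "(\<Sum>(u,v)\<in>pairs {0..<2*k}. if same_cluster P u v then sg k u * sg k v else 0) \<ge> - real k"
proof -
  let ?V = "{0..<2*k}"
  have "(\<Sum>(u,v)\<in>?V\<times>?V. if same_cluster P u v then sg k u * sg k v else 0) = (\<Sum>u\<in>?V. if same_cluster P u u then sg k u * sg k u else 0) + 2 * (\<Sum>(u,v)\<in>pairs ?V. if same_cluster P u v then sg k u * sg k v else 0)"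
    by (rule sym_sum) (auto simp: same_cluster_def mult.commute)
  moreover have "(\<Sum>u\<in>?V. if same_cluster P u u then sg k u * sg k u else 0) = (\<Sum>u\<in>?V. 1)"
  proof (rule sum.cong)
    fix u assume "u \<in> ?V"
    then have "same_cluster P u u" using P unfolding partition_on_def same_cluster_def by blast
    then show "(if same_cluster P u u then sg k u * sg k u else 0) = 1" by (simp add: sg_sq)
  qed simp
  moreover have "(\<Sum>(u,v)\<in>?V\<times>?V. if same_cluster P u v then sg k u * sg k v else 0) \<ge> 0"
    by (rule partition_sum_nonneg) (auto simp: P)
  ultimately show ?thesis by simp
qed

lemma cost_eq:
  "cc_cost {0..<2*k} (lpw k) P = (\<Sum>(u,v)\<in>pairs {0..<2*k}. (1::real)) / 2
     - (\<Sum>(u,v)\<in>pairs {0..<2*k}. sg k u * sg k v) / 6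
     + (\<Sum>(u,v)\<in>pairs {0..<2*k}. if same_cluster P u v then sg k u * sg k v else 0) / 3"
proof -
  have "cc_cost {0..<2*k} (lpw k) P = (\<Sum>(u,v)\<in>pairs {0..<2*k}. 1 / 2 - sg k u * sg k v / 6 + (if same_cluster P u v then sg k u * sg k v else 0) / 3)"
    unfolding cc_cost_def by (rule sum.cong) (auto simp: lpw_def)
  also have "\<dots> = (\<Sum>(u,v)\<in>pairs {0..<2*k}. (1::real)) / 2
     - (\<Sum>(u,v)\<in>pairs {0..<2*k}. sg k u * sg k v) / 6
     + (\<Sum>(u,v)\<in>pairs {0..<2*k}. if same_cluster P u v then sg k u * sg k v else 0) / 3"
    by (simp add: sum.distrib sum_subtractf sum_divide_distrib case_prod_unfold)
  finally show ?thesis .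
qed

lemma cost_lb:
  assumes P: "partition_on {0..<2*k} P"
  shows "cc_cost {0..<2*k} (lpw k) P \<ge> real k ^ 2 - 2 * real k / 3"
  using S1[of k] S2[of k] S3[OF P] unfolding cost_eq by linarith

lemma obj_eq:
  "lp_obj {0..<2*k} (lpw k) (xw k) = (5 * real k ^ 2 - 2 * real k) / 6"
proof -
  have "lp_obj {0..<2*k} (lpw k) (xw k) = (\<Sum>(u,v)\<in>pairs {0..<2*k}. 5/12 * 1 - sg k u * sg k v / 12)"
    unfolding lp_obj_def
  proof (rule sum.cong)
    fix p assume "p \<in> pairs {0..<2*k}"
    then obtain u v where p: "p = (u,v)" "u \<noteq> v" by (auto simp: pairs_def)
    show "(case p of (u, v) \<Rightarrow> lpw k u v * xw k u v + (1 - lpw k u v) * (1 - xw k u v)) =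
          (case p of (u, v) \<Rightarrow> 5/12 * 1 - sg k u * sg k v / 12)"
      using p by (auto simp: lpw_def xw_def sg_def)
  qed simp
  also have "\<dots> = 5/12 * (\<Sum>(u,v)\<in>pairs {0..<2*k}. (1::real)) - (\<Sum>(u,v)\<in>pairs {0..<2*k}. sg k u * sg k v) / 12"
    by (simp add: sum_subtractf sum_divide_distrib sum_distrib_left case_prod_unfold)
  also have "\<dots> = (5 * real k ^ 2 - 2 * real k) / 6"
    unfolding S1 S2 by (simp add: field_simps)
  finally show ?thesis .
qed

lemma valid: "valid_weights V (lpw k)"
  unfolding valid_weights_def lpw_def sg_def by auto

lemma tri: "triangle_ineq V (lpw k)"
  unfolding triangle_ineq_def lpw_def sg_def by auto

lemma feas: "lp_feasible V (xw k)"
  unfolding lp_feasible_def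
proof (intro conjI ballI)
  fix u v assume "u \<in> V" "v \<in> V"
  show "xw k u v = xw k v u" "0 \<le> xw k u v" "xw k u v \<le> 1"
    unfolding xw_def sg_def by auto
next
  fix u assume "u \<in> V" show "xw k u u = 0" by (simp add: xw_def)
next
  fix u v w assume "u \<in> V" "v \<in> V" "w \<in> V"
  have lo: "\<And>a b. a \<noteq> b \<Longrightarrow> xw k a b \<ge> 1/2" unfolding xw_def sg_def by auto
  have hi: "\<And>a b. xw k a b \<le> 1" "\<And>a b. xw k a b \<ge> 0" unfolding xw_def sg_def by auto
  show "xw k u w \<le> xw k u v + xw k v w"
  proof (cases "u = w")
    case True then show ?thesis using hi(2)[of u v] hi(2)[of v w] by (simp add: xw_def)
  next
    case False
    show ?thesis
    proof (cases "v = u \<or> v = w")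
      case True then show ?thesis using False hi(2) by (auto simp: xw_def)
    next
      case F2: False
      then show ?thesis using lo[of u v] lo[of v w] hi(1)[of u w] by auto
    qed
  qed
qed

lemma term_lb:
  assumes "0 \<le> x" "x \<le> 1"
  shows "lpw k u v * x + (1 - lpw k u v) * (1 - x) \<ge> 1/3"
  using assms unfolding lpw_def sg_def by (auto simp: field_simps)

lemma obj_lb:
  assumes "lp_feasible {0..<2*k} x"
  shows "lp_obj {0..<2*k} (lpw k) x \<ge> (2 * real k ^ 2 - real k) / 3"
proof -
  have "(2 * real k ^ 2 - real k) / 3 = (\<Sum>(u,v)\<in>pairs {0..<2*k}. (1::real)) / 3"
    by (simp only: S1)
  also have "\<dots> = (\<Sum>(u,v)\<in>pairs {0..<2*k}. (1::real) / 3)"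
    by (simp add: sum_divide_distrib case_prod_unfold)
  also have "\<dots> \<le> lp_obj {0..<2*k} (lpw k) x"
    unfolding lp_obj_def
  proof (rule sum_mono)
    fix p assume "p \<in> pairs {0..<2*k}"
    then obtain u v where p: "p = (u,v)" "u \<in> {0..<2*k}" "v \<in> {0..<2*k}" by (auto simp: pairs_def)
    then have "0 \<le> x u v" "x u v \<le> 1" using assms unfolding lp_feasible_def by auto
    then show "(case p of (u, v) \<Rightarrow> 1 / 3) \<le> (case p of (u, v) \<Rightarrow> lpw k u v * x u v + (1 - lpw k u v) * (1 - x u v))"
      using term_lb p(1) by simp
  qed
  finally show ?thesis .
qed

lemma instance_bounds:
  assumes k: "k \<ge> 1"
  shows "lp_opt {0..<2*k} (lpw k) > 0"
    and "lp_opt {0..<2*k} (lpw k) \<le> (5 * real k ^ 2 - 2 * real k) / 6"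
    and "cc_opt {0..<2*k} (lpw k) \<ge> real k ^ 2 - 2 * real k / 3"
proof -
  let ?S = "lp_obj {0..<2*k} (lpw k) ` {x. lp_feasible {0..<2*k} x}"
  have ne: "?S \<noteq> {}" using feas by blast
  have lb: "\<And>y. y \<in> ?S \<Longrightarrow> (2 * real k ^ 2 - real k) / 3 \<le> y" using obj_lb by blast
  have pos: "(2 * real k ^ 2 - real k) / 3 > 0"
  proof -
    have k1: "real k \<ge> 1" using k by simp
    then have "real k ^ 2 \<ge> real k" by (simp add: power2_eq_square)
    then have "2 * real k ^ 2 - real k > 0" using k1 by linarith
    then show ?thesis by simp
  qed
  have "(2 * real k ^ 2 - real k) / 3 \<le> Inf ?S" by (rule cInf_greatest[OF ne lb])
  then show "lp_opt {0..<2*k} (lpw k) > 0" unfolding lp_opt_def using pos by linarith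
  have bdd: "bdd_below ?S" using lb by (intro bdd_belowI) 
  have "Inf ?S \<le> lp_obj {0..<2*k} (lpw k) (xw k)"
    by (rule cInf_lower[OF _ bdd]) (use feas in blast)
  then show "lp_opt {0..<2*k} (lpw k) \<le> (5 * real k ^ 2 - 2 * real k) / 6"
    unfolding lp_opt_def obj_eq .
  let ?T = "cc_cost {0..<2*k} (lpw k) ` {P. partition_on {0..<2*k} P}"
  have "partition_on {0..<2*k} {{0..<2*k}}" using k by (intro partition_on_space) auto
  then have ne2: "?T \<noteq> {}" by blast
  show "cc_opt {0..<2*k} (lpw k) \<ge> real k ^ 2 - 2 * real k / 3"
    unfolding cc_opt_def by (rule cInf_greatest[OF ne2]) (auto intro: cost_lb)
qed

theorem theorem6:
  fixes \<delta> :: real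
  assumes "\<delta> > 0"
  shows "\<exists>V lp. finite V \<and> valid_weights V lp \<and> triangle_ineq V lp \<and>
           lp_opt V lp > 0 \<and> cc_opt V lp / lp_opt V lp \<ge> 6/5 - \<delta>"
proof -
  define k where "k = nat \<lceil>1 / \<delta>\<rceil> + 1"
  have k1: "k \<ge> 1" by (simp add: k_def)
  define K where "K = real k"
  have K1: "K \<ge> 1" using k1 by (simp add: K_def)
  have "real k \<ge> 1 / \<delta>" unfolding k_def by linarith
  then have Kd: "K * \<delta> \<ge> 1" using assms by (simp add: K_def field_simps)
  note b = instance_bounds[OF k1]
  define L where "L = lp_opt {0..<2*k} (lpw k)"
  define C where "C = cc_opt {0..<2*k} (lpw k)"
  have L0: "L > 0" and LB: "L \<le> (5 * K ^ 2 - 2 * K) / 6" and CA: "C \<ge> K ^ 2 - 2 * K / 3"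
    using b by (simp_all add: L_def C_def K_def)
  have A0: "K ^ 2 - 2 * K / 3 > 0"
  proof -
    have "K ^ 2 \<ge> K" using K1 by (simp add: power2_eq_square)
    then show ?thesis using K1 by simp
  qed
  have key: "(6/5 - \<delta>) * ((5 * K ^ 2 - 2 * K) / 6) \<le> K ^ 2 - 2 * K / 3"
  proof -
    have "\<delta> * ((5 * K ^ 2 - 2 * K) / 6) = (K * \<delta>) * ((5 * K - 2) / 6)"
      by (simp add: power2_eq_square field_simps)
    also have "\<dots> \<ge> 1 * ((5 * K - 2) / 6)"
      using Kd K1 by (intro mult_right_mono) auto
    finally have "\<delta> * ((5 * K ^ 2 - 2 * K) / 6) \<ge> (5 * K - 2) / 6" by simp
    then show ?thesis using K1 by (simp add: power2_eq_square field_simps)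
  qed
  have "6/5 - \<delta> \<le> C / L"
  proof (cases "6/5 - \<delta> \<le> 0")
    case True
    have "C / L \<ge> 0" using CA A0 L0 by simp
    then show ?thesis using True by linarith
  next
    case False
    have "(6/5 - \<delta>) * L \<le> (6/5 - \<delta>) * ((5 * K ^ 2 - 2 * K) / 6)"
      using False LB by (intro mult_left_mono) auto
    also have "\<dots> \<le> C" using key CA by linarith
    finally show ?thesis using L0 by (simp add: pos_le_divide_eq)
  qed
  then show ?thesis
    using L0 valid tri unfolding L_def C_def
    by (intro exI[of _ "{0..<2*k}"] exI[of _ "lpw k"]) auto
qed

end
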